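(* Let $j \geq 2$ be an integer and let $(S^{2j}, g)$ be the standard $2j$-dimensional round sphere of constant sectional curvature $1$. Then even, $G_t$-invariant complex measures on the unit tangent bundle $S(S^{2j})$ are not determined by their projection to $S^{2j}$: there exist two distinct even, $G_t$-invariant complex measures on $S(S^{2j})$ with the same projection to $S^{2j}$. In particular, there exists a non-zero, even, $G_t$-invariant finite real (signed) measure $\mu$ on $S(S^{2j})$ whose projection to $S^{2j}$ is zero, i.e. $\mu(\pi^{-1}(A)) = 0$ for every Borel set $A \subseteq S^{2j}$. *)

theory Defs
  imports "HOL-Analysis.Analysis"
begin

text \<open>The round unit sphere S^n sits in R^(n+1) = real^'n with CARD('n) = n+1.
  Its unit tangent bundle is the set of pairs (x,v) with |x| = |v| = 1, x.v = 0.\<close>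

definition unit_sphere :: "(real^'n) set" where
  "unit_sphere = {x. norm x = 1}"

definition unit_tangent_bundle :: "((real^'n) \<times> (real^'n)) set" where
  "unit_tangent_bundle = {(x, v). norm x = 1 \<and> norm v = 1 \<and> inner x v = 0}"

definition UTB_space :: "((real^'n) \<times> (real^'n)) measure" where
  "UTB_space = restrict_space borel unit_tangent_bundle"

definition sphere_space :: "(real^'n) measure" where
  "sphere_space = restrict_space borel unit_sphere"

definition geodesic_flow :: "real \<Rightarrow> (real^'n) \<times> (real^'n) \<Rightarrow> (real^'n) \<times> (real^'n)" where
  "geodesic_flow t = (\<lambda>(x, v). (cos t *\<^sub>R x + sin t *\<^sub>R v, (- sin t) *\<^sub>R x + cos t *\<^sub>R v))"

definition flip_map :: "(real^'n) \<times> (real^'n) \<Rightarrow> (real^'n) \<times> (real^'n)" where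
  "flip_map = (\<lambda>(x, v). (x, - v))"

definition bundle_proj :: "(real^'n) \<times> (real^'n) \<Rightarrow> real^'n" where
  "bundle_proj = fst"

text \<open>A complex measure (resp. finite real signed measure) on a measurable space M:
  a countably additive set function on sets M with values in 'a.
  Values outside sets M are irrelevant.\<close>
definition countably_additive_on :: "'b measure \<Rightarrow> ('b set \<Rightarrow> 'a::real_normed_vector) \<Rightarrow> bool" where
  "countably_additive_on M \<nu> \<longleftrightarrow>
     (\<forall>A :: nat \<Rightarrow> 'b set. range A \<subseteq> sets M \<longrightarrow> disjoint_family A \<longrightarrow>
        (\<lambda>i. \<nu> (A i)) sums \<nu> (\<Union>i. A i))"

abbreviation complex_measure_on :: "'b measure \<Rightarrow> ('b set \<Rightarrow> complex) \<Rightarrow> bool" where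
  "complex_measure_on M \<nu> \<equiv> countably_additive_on M \<nu>"

abbreviation signed_measure_on :: "'b measure \<Rightarrow> ('b set \<Rightarrow> real) \<Rightarrow> bool" where
  "signed_measure_on M \<nu> \<equiv> countably_additive_on M \<nu>"

definition even_measure :: "(((real^'n) \<times> (real^'n)) set \<Rightarrow> 'a) \<Rightarrow> bool" where
  "even_measure \<nu> \<longleftrightarrow>
     (\<forall>A\<in>sets UTB_space. \<nu> (flip_map -` A \<inter> unit_tangent_bundle) = \<nu> A)"

definition flow_invariant :: "(((real^'n) \<times> (real^'n)) set \<Rightarrow> 'a) \<Rightarrow> bool" where
  "flow_invariant \<nu> \<longleftrightarrow>
     (\<forall>t. \<forall>A\<in>sets UTB_space. \<nu> (geodesic_flow t -` A \<inter> unit_tangent_bundle) = \<nu> A)"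

definition proj_measure :: "(((real^'n) \<times> (real^'n)) set \<Rightarrow> 'a) \<Rightarrow> (real^'n) set \<Rightarrow> 'a" where
  "proj_measure \<nu> A = \<nu> (bundle_proj -` A \<inter> unit_tangent_bundle)"

end

theory Submission
  imports Defs
begin

definition cs :: "(real^'m \<Rightarrow> real^'n) \<Rightarrow> (real^'m \<Rightarrow> real^'m) \<Rightarrow> bool" where
 "cs E J \<longleftrightarrow> linear E \<and> linear J \<and> (\<forall>x y. inner (E x) (E y) = inner x y) \<and>
   (\<forall>x. J (J x) = - x) \<and> (\<forall>x. inner x (J x) = 0) \<and> (\<forall>x. norm (J x) = norm x)"

definition Phi :: "(real^'m \<Rightarrow> real^'n) \<Rightarrow> (real^'m \<Rightarrow> real^'m) \<Rightarrow> real^'m \<Rightarrow> ((real^'n) \<times> (real^'n))" where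
 "Phi E J x = (inverse (norm x) *\<^sub>R E x, inverse (norm x) *\<^sub>R E (J x))"

definition Rot :: "(real^'m \<Rightarrow> real^'m) \<Rightarrow> real \<Rightarrow> real^'m \<Rightarrow> real^'m" where
 "Rot J t x = cos t *\<^sub>R x + sin t *\<^sub>R J x"

lemma cs_neg: "cs E J \<Longrightarrow> cs E (\<lambda>x. - J x)"
  unfolding cs_def by (auto simp: linear_uminus linear_neg linear_compose_neg)

lemma cs_normE: "cs E J \<Longrightarrow> norm (E x) = norm x"
  unfolding cs_def by (simp add: norm_eq_sqrt_inner)

lemma cs_innerJ: "cs E J \<Longrightarrow> inner (E x) (E (J x)) = 0"
  unfolding cs_def by simp

lemma Phi_UTB: assumes "cs E J" shows "Phi E J x \<in> unit_tangent_bundle \<longleftrightarrow> x \<noteq> 0"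
proof
  assume "Phi E J x \<in> unit_tangent_bundle" then show "x \<noteq> 0"
    by (auto simp: Phi_def unit_tangent_bundle_def)
next
  assume h: "x \<noteq> 0"
  from assms have n: "norm (E (J x)) = norm x" "norm (E x) = norm x" and i: "inner (E x) (E (J x)) = 0"
    using cs_normE[OF assms] cs_innerJ[OF assms] by (auto simp: cs_def)
  show "Phi E J x \<in> unit_tangent_bundle" using h n i
    by (auto simp: Phi_def unit_tangent_bundle_def)
qed

lemma Rot_J: assumes "cs E J" shows "J (Rot J t x) = cos t *\<^sub>R J x - sin t *\<^sub>R x"
proof -
  from assms have l: "linear J" and a: "J (J x) = - x" by (auto simp: cs_def)
  have "J (Rot J t x) = cos t *\<^sub>R J x + sin t *\<^sub>R J (J x)"
    unfolding Rot_def by (simp only: linear_add[OF l] linear_scale[OF l])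
  then show ?thesis using a by (simp add: algebra_simps)
qed

lemma Rot_inv: assumes "cs E J" shows "Rot J (-t) (Rot J t x) = x"
proof -
  have "Rot J (-t) (Rot J t x) = (cos t * cos t) *\<^sub>R x + (sin t * sin t) *\<^sub>R x"
    unfolding Rot_def[of J "-t"] Rot_J[OF assms]
    by (simp add: Rot_def algebra_simps)
  also have "\<dots> = x" by (simp only: scaleR_add_left[symmetric] sin_cos_squared_add3 scaleR_one)
  finally show ?thesis .
qed

lemma Rot_linear: assumes "cs E J" shows "linear (Rot J t)"
proof -
  from assms have l: "linear J" by (auto simp: cs_def)
  show ?thesis
    by (rule linearI) (simp_all add: Rot_def linear_add[OF l] linear_scale[OF l] algebra_simps)
qed

lemma Rot_norm: assumes "cs E J" shows "norm (Rot J t x) = norm x"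
proof -
  from assms have n: "norm (J x) = norm x" and i: "inner x (J x) = 0" by (auto simp: cs_def)
  have "(norm (Rot J t x))^2 = (cos t)^2 * (norm x)^2 + (sin t)^2 * (norm (J x))^2"
    unfolding Rot_def power2_norm_eq_inner using i
    by (simp add: inner_add inner_commute algebra_simps power2_eq_square)
  also have "\<dots> = (norm x)^2" using n by (simp add: algebra_simps sin_squared_eq)
  finally show ?thesis by (simp add: power2_eq_iff_nonneg)
qed

lemma flow_Phi: assumes "cs E J"
  shows "geodesic_flow t (Phi E J x) = Phi E J (Rot J t x)"
proof -
  from assms have l: "linear E" by (auto simp: cs_def)
  show ?thesis
    unfolding Phi_def geodesic_flow_def Rot_norm[OF assms] Rot_J[OF assms]
    by (simp add: Rot_def linear_add[OF l] linear_scale[OF l] linear_diff[OF l] algebra_simps)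
qed

lemma cs_lin: assumes "cs E J" shows "E \<in> borel_measurable borel" "J \<in> borel_measurable borel"
  using assms unfolding cs_def
  by (auto intro!: borel_measurable_continuous_onI linear_continuous_on simp: linear_conv_bounded_linear)

lemma Phi_meas: assumes "cs E J" shows "Phi E J \<in> borel_measurable borel"
proof -
  note m = cs_lin[OF assms]
  show ?thesis unfolding Phi_def[abs_def] borel_prod[symmetric]
    using m by measurable
qed

lemma UTB_closed: "closed (unit_tangent_bundle :: ((real^'n) \<times> (real^'n)) set)"
proof -
  have "unit_tangent_bundle = {p :: (real^'n) \<times> (real^'n). norm (fst p) = 1 \<and> norm (snd p) = 1 \<and> inner (fst p) (snd p) = 0}"
    by (auto simp: unit_tangent_bundle_def)
  also have "closed \<dots>"
    by (intro closed_Collect_conj closed_Collect_eq continuous_intros)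
  finally show ?thesis .
qed

lemma UTB_sets: assumes "A \<in> sets (UTB_space :: ((real^'n) \<times> (real^'n)) measure)"
  shows "A \<in> sets borel" "A \<subseteq> unit_tangent_bundle"
  using assms UTB_closed unfolding UTB_space_def sets_restrict_space
  by (auto intro: borel_closed)

definition mJ :: "(real^'m \<Rightarrow> real^'n) \<Rightarrow> (real^'m \<Rightarrow> real^'m) \<Rightarrow> ((real^'n) \<times> (real^'n)) set \<Rightarrow> real" where
  "mJ E J A = measure lborel (Phi E J -` A \<inter> ball 0 1)"

lemma mJ_ca: fixes E :: "real^'m \<Rightarrow> real^'n" and J :: "real^'m \<Rightarrow> real^'m" assumes "cs E J" shows "countably_additive_on UTB_space (mJ E J)"
  unfolding countably_additive_on_def
proof (intro allI impI)
  fix A :: "nat \<Rightarrow> ((real^'n) \<times> (real^'n)) set" assume r: "range A \<subseteq> sets UTB_space" and d: "disjoint_family A"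
  have m: "Phi E J -` A i \<inter> ball 0 1 \<in> sets lborel" for i
    using UTB_sets(1)[of "A i"] r Phi_meas[OF assms] by (auto intro!: sets.Int measurable_sets_borel)
  have e: "(\<Union>i. Phi E J -` A i \<inter> ball 0 1) = Phi E J -` (\<Union>i. A i) \<inter> ball 0 1" by auto
  have "(\<lambda>i. measure lborel (Phi E J -` A i \<inter> ball 0 1)) sums measure lborel (\<Union>i. Phi E J -` A i \<inter> ball 0 1)"
  proof (rule measure_UNION)
    show "range (\<lambda>i. Phi E J -` A i \<inter> ball 0 1) \<subseteq> sets lborel" using m by auto
    show "disjoint_family (\<lambda>i. Phi E J -` A i \<inter> ball 0 1)" using d unfolding disjoint_family_on_def by blast
    have "emeasure lborel (\<Union>i. Phi E J -` A i \<inter> ball 0 1) \<le> emeasure lborel (ball (0::real^'m) 1)"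
      by (rule emeasure_mono) auto
    then show "emeasure lborel (\<Union>i. Phi E J -` A i \<inter> ball 0 1) \<noteq> \<infinity>"
      using emeasure_lborel_ball_finite[of "0::real^'m" 1] by (auto simp: top_unique)
  qed
  then show "(\<lambda>i. mJ E J (A i)) sums mJ E J (\<Union>i. A i)" unfolding mJ_def e .
qed

lemma orth_Rot: assumes "cs E J" shows "orthogonal_transformation (Rot J t)"
  unfolding orthogonal_transformation using Rot_linear[OF assms] Rot_norm[OF assms] by auto

lemma Rot_meas: assumes "cs E J" shows "Rot J t \<in> borel_measurable borel"
  using Rot_linear[OF assms]
  by (auto intro!: borel_measurable_continuous_onI linear_continuous_on simp: linear_conv_bounded_linear)

lemma Rot_invariant: fixes J :: "(real, 'm::{finite,wellorder}) vec \<Rightarrow> (real, 'm) vec" assumes "cs E J" "S \<in> sets borel"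
  shows "measure lborel (Rot J t -` S \<inter> ball 0 1) = measure lborel (S \<inter> ball 0 1)"
proof -
  let ?T = "S \<inter> ball 0 1"
  have Tb: "?T \<in> sets borel" using assms(2) by auto
  have eq: "Rot J t -` S \<inter> ball 0 1 = Rot J (-t) ` ?T"
  proof (rule set_eqI, rule iffI)
    fix x assume "x \<in> Rot J t -` S \<inter> ball 0 1"
    then show "x \<in> Rot J (-t) ` ?T"
      using Rot_inv[OF assms(1), of t x] Rot_norm[OF assms(1), of t x]
      by (intro image_eqI[of _ _ "Rot J t x"]) auto
  next
    fix x assume "x \<in> Rot J (-t) ` ?T"
    then obtain y where y: "y \<in> ?T" "x = Rot J (-t) y" by blast
    have "Rot J t x = y" using y(2) Rot_inv[OF assms(1), of "-t" y] by simp
    moreover have "norm x = norm y" using y(2) Rot_norm[OF assms(1), of "-t" y] by simp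
    ultimately show "x \<in> Rot J t -` S \<inter> ball 0 1" using y(1) by auto
  qed
  have Tl: "?T \<in> lmeasurable"
    by (rule bounded_set_imp_lmeasurable) (use Tb in \<open>auto intro: sets_completionI_sets\<close>)
  have pb: "Rot J t -` S \<inter> ball 0 1 \<in> sets borel"
    using Rot_meas[OF assms(1), of t] assms(2) by (auto intro!: sets.Int measurable_sets_borel)
  have "measure lborel (Rot J t -` S \<inter> ball 0 1) = measure lebesgue (Rot J t -` S \<inter> ball 0 1)"
    using pb by simp
  also have "\<dots> = measure lebesgue ?T" unfolding eq
    by (rule measure_orthogonal_image[OF orth_Rot[OF assms(1)] Tl])
  also have "\<dots> = measure lborel ?T" using Tb by simp
  finally show ?thesis .
qed

lemma mJ_proj: assumes "cs E J"
  shows "mJ E J (bundle_proj -` A \<inter> unit_tangent_bundle) = measure lborel {x \<in> ball 0 1. x \<noteq> 0 \<and> inverse (norm x) *\<^sub>R E x \<in> A}"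
proof -
  have "Phi E J -` (bundle_proj -` A \<inter> unit_tangent_bundle) \<inter> ball 0 1 = {x \<in> ball 0 1. x \<noteq> 0 \<and> inverse (norm x) *\<^sub>R E x \<in> A}"
  proof (rule set_eqI)
    fix x
    have "fst (Phi E J x) = inverse (norm x) *\<^sub>R E x" by (simp add: Phi_def)
    then show "x \<in> Phi E J -` (bundle_proj -` A \<inter> unit_tangent_bundle) \<inter> ball 0 1 \<longleftrightarrow> x \<in> {x \<in> ball 0 1. x \<noteq> 0 \<and> inverse (norm x) *\<^sub>R E x \<in> A}"
      using Phi_UTB[OF assms(1), of x] unfolding bundle_proj_def by auto
  qed
  then show ?thesis unfolding mJ_def by simp
qed

lemma mJ_flip: assumes "cs E J" "A \<in> sets UTB_space"
  shows "mJ E J (flip_map -` A \<inter> unit_tangent_bundle) = mJ E (\<lambda>x. - J x) A"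
proof -
  have sub: "A \<subseteq> unit_tangent_bundle" by (rule UTB_sets(2)[OF assms(2)])
  from assms have l: "linear E" by (auto simp: cs_def)
  have f: "flip_map (Phi E J x) = Phi E (\<lambda>x. - J x) x" for x
    unfolding flip_map_def Phi_def using linear_neg[OF l, of "J x"] by simp
  have "Phi E J -` (flip_map -` A \<inter> unit_tangent_bundle) \<inter> ball 0 1 = Phi E (\<lambda>x. - J x) -` A \<inter> ball 0 1"
  proof (rule set_eqI)
    fix x
    have u: "Phi E J x \<in> unit_tangent_bundle \<longleftrightarrow> Phi E (\<lambda>x. - J x) x \<in> unit_tangent_bundle"
      using Phi_UTB[OF assms(1), of x] Phi_UTB[OF cs_neg[OF assms(1)], of x] by simp
    have "Phi E (\<lambda>x. - J x) x \<in> A \<Longrightarrow> Phi E J x \<in> unit_tangent_bundle"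
      using sub u by blast
    then show "x \<in> Phi E J -` (flip_map -` A \<inter> unit_tangent_bundle) \<inter> ball 0 1 \<longleftrightarrow> x \<in> Phi E (\<lambda>x. - J x) -` A \<inter> ball 0 1"
      using f[of x] by auto
  qed
  then show ?thesis unfolding mJ_def by simp
qed

lemma mJ_flow: fixes J :: "(real, 'm::{finite,wellorder}) vec \<Rightarrow> (real, 'm) vec"
  assumes "cs E J" "A \<in> sets UTB_space"
  shows "mJ E J (geodesic_flow t -` A \<inter> unit_tangent_bundle) = mJ E J A"
proof -
  have sub: "A \<subseteq> unit_tangent_bundle" by (rule UTB_sets(2)[OF assms(2)])
  have "Phi E J -` (geodesic_flow t -` A \<inter> unit_tangent_bundle) \<inter> ball 0 1 = Rot J t -` (Phi E J -` A) \<inter> ball 0 1"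
  proof (rule set_eqI, rule iffI)
    fix x assume "x \<in> Phi E J -` (geodesic_flow t -` A \<inter> unit_tangent_bundle) \<inter> ball 0 1"
    then show "x \<in> Rot J t -` (Phi E J -` A) \<inter> ball 0 1"
      using flow_Phi[OF assms(1), of t x] by simp
  next
    fix x assume h: "x \<in> Rot J t -` (Phi E J -` A) \<inter> ball 0 1"
    then have "Phi E J (Rot J t x) \<in> unit_tangent_bundle" using sub by auto
    then have "Rot J t x \<noteq> 0" using Phi_UTB[OF assms(1)] by blast
    then have "x \<noteq> 0" using Rot_norm[OF assms(1)] by (metis norm_eq_zero)
    then show "x \<in> Phi E J -` (geodesic_flow t -` A \<inter> unit_tangent_bundle) \<inter> ball 0 1"
      using h flow_Phi[OF assms(1), of t x] Phi_UTB[OF assms(1), of x] by simp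
  qed
  moreover have "Phi E J -` A \<in> sets borel"
    using UTB_sets(1)[OF assms(2)] Phi_meas[OF assms(1)] by (simp add: measurable_sets_borel)
  ultimately show ?thesis unfolding mJ_def
    using Rot_invariant[OF assms(1), of "Phi E J -` A" t] by simp
qed

definition J4 :: "real^4 \<Rightarrow> real^4" where
  "J4 x = (\<chi> i. if i = 1 then - x$2 else if i = 2 then x$1 else if i = 3 then - x$4 else x$3)"
definition K4 :: "real^4 \<Rightarrow> real^4" where
  "K4 x = (\<chi> i. if i = 1 then - x$2 else if i = 2 then x$1 else if i = 3 then x$4 else - x$3)"
definition Emb :: "'n \<Rightarrow> 'n \<Rightarrow> 'n \<Rightarrow> 'n \<Rightarrow> real^4 \<Rightarrow> real^'n" where
  "Emb a b c d y = (\<chi> i. if i = a then y$1 else if i = b then y$2 else if i = c then y$3 else if i = d then y$4 else 0)"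
definition Fx :: "'n \<Rightarrow> 'n \<Rightarrow> 'n \<Rightarrow> 'n \<Rightarrow> real^'n \<Rightarrow> real^4" where
  "Fx a b c d x = (\<chi> i. if i = 1 then x$a else if i = 2 then x$b else if i = 3 then x$c else x$d)"

lemma sum_abcd:
  fixes f :: "'n::finite \<Rightarrow> real"
  assumes "distinct [a,b,c,d]" "\<And>i. i \<notin> {a,b,c,d} \<Longrightarrow> f i = 0"
  shows "sum f UNIV = f a + f b + f c + f d"
proof -
  have "sum f UNIV = sum f {a,b,c,d}"
    by (rule sum.mono_neutral_right) (use assms(2) in auto)
  also have "\<dots> = f a + f b + f c + f d" using assms(1) by simp
  finally show ?thesis .
qed

lemma Emb_comp:
  assumes "distinct [a,b,c,d]"
  shows "Emb a b c d y $ a = y$1" "Emb a b c d y $ b = y$2" "Emb a b c d y $ c = y$3" "Emb a b c d y $ d = y$4"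
  using assms by (auto simp: Emb_def)

lemma Emb_linear: "linear (Emb a b c d)"
  by (rule linearI) (auto simp: Emb_def vec_eq_iff)

lemma Fx_linear: "linear (Fx a b c d)"
  by (rule linearI) (auto simp: Fx_def vec_eq_iff)

lemma Fx_Emb: assumes "distinct [a,b,c,d]" shows "Fx a b c d (Emb a b c d y) = y"
proof -
  from assms have "a \<noteq> b" "b \<noteq> a" "a \<noteq> c" "c \<noteq> a" "a \<noteq> d" "d \<noteq> a" "b \<noteq> c" "c \<noteq> b"
    "b \<noteq> d" "d \<noteq> b" "c \<noteq> d" "d \<noteq> c" by auto
  then show ?thesis by (simp add: Fx_def Emb_def vec_eq_iff forall_4)
qed

lemma Emb_inner: assumes "distinct [a,b,c,d]"
  shows "inner (Emb a b c d x) (Emb a b c d y) = inner x y"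
proof -
  have "inner (Emb a b c d x) (Emb a b c d y) = (\<Sum>i\<in>UNIV. Emb a b c d x $ i * Emb a b c d y $ i)"
    by (simp add: inner_vec_def)
  also have "\<dots> = x$1 * y$1 + x$2 * y$2 + x$3 * y$3 + x$4 * y$4"
    by (subst sum_abcd[OF assms]) (use assms in \<open>auto simp: Emb_def\<close>)
  also have "\<dots> = inner x y" by (simp add: inner_vec_def sum_4)
  finally show ?thesis .
qed

lemma J4_cs: assumes "distinct [a,b,c,d]" shows "cs (Emb a b c d) J4"
  unfolding cs_def
proof (intro conjI allI)
  show "linear (Emb a b c d)" by (rule Emb_linear)
  show "linear J4" by (rule linearI) (auto simp: J4_def vec_eq_iff)
  fix x y show "inner (Emb a b c d x) (Emb a b c d y) = inner x y" by (rule Emb_inner[OF assms])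
  show "J4 (J4 x) = - x" unfolding J4_def by (simp add: vec_eq_iff forall_4)
  show "inner x (J4 x) = 0" unfolding J4_def by (simp add: inner_vec_def sum_4)
  show "norm (J4 x) = norm x" unfolding J4_def by (simp add: norm_eq_sqrt_inner inner_vec_def sum_4 algebra_simps)
qed

lemma K4_cs: assumes "distinct [a,b,c,d]" shows "cs (Emb a b c d) K4"
  unfolding cs_def
proof (intro conjI allI)
  show "linear (Emb a b c d)" by (rule Emb_linear)
  show "linear K4" by (rule linearI) (auto simp: K4_def vec_eq_iff)
  fix x y show "inner (Emb a b c d x) (Emb a b c d y) = inner x y" by (rule Emb_inner[OF assms])
  show "K4 (K4 x) = - x" unfolding K4_def by (simp add: vec_eq_iff forall_4)
  show "inner x (K4 x) = 0" unfolding K4_def by (simp add: inner_vec_def sum_4)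
  show "norm (K4 x) = norm x" unfolding K4_def by (simp add: norm_eq_sqrt_inner inner_vec_def sum_4 algebra_simps)
qed

lemma ex_abcd: fixes dummy :: "'n::finite" assumes "CARD('n) \<ge> 4" obtains a b c d :: 'n where "distinct [a,b,c,d]"
proof -
  obtain h where h: "bij_betw h {0..<CARD('n)} (UNIV::'n set)"
    using ex_bij_betw_nat_finite[of "UNIV::'n set"] by auto
  then have inj: "inj_on h {0..<CARD('n)}" by (rule bij_betw_imp_inj_on)
  have "distinct [h 0, h 1, h 2, h 3]" using assms by (simp add: inj_on_eq_iff[OF inj])
  then show ?thesis using that by blast
qed

lemma pre_B:
  fixes a b c d :: "'n::finite" and J' :: "real^4 \<Rightarrow> real^4"
  assumes dist: "distinct [a,b,c,d]" and cs': "cs (Emb a b c d) J'"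
  defines "JJ \<equiv> \<lambda>x. Emb a b c d (J4 (Fx a b c d x))"
  defines "B \<equiv> {p \<in> unit_tangent_bundle. snd p = JJ (fst p) \<and> 0 < (fst p $ a)^2 + (fst p $ b)^2 \<and> 0 < (fst p $ c)^2 + (fst p $ d)^2}"
  shows "Phi (Emb a b c d) J' -` B \<inter> ball 0 1 = {y \<in> ball 0 1. J' y = J4 y \<and> 0 < (y$1)^2 + (y$2)^2 \<and> 0 < (y$3)^2 + (y$4)^2}"
proof (rule set_eqI)
  fix y :: "real^4"
  let ?E = "Emb a b c d"
  have lE: "linear ?E" by (rule Emb_linear)
  have lF: "linear (Fx a b c d)" by (rule Fx_linear)
  have lJ: "linear J4" using J4_cs[OF dist] by (simp add: cs_def)
  show "y \<in> Phi ?E J' -` B \<inter> ball 0 1 \<longleftrightarrow> y \<in> {y \<in> ball 0 1. J' y = J4 y \<and> 0 < (y$1)^2 + (y$2)^2 \<and> 0 < (y$3)^2 + (y$4)^2}"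
  proof (cases "y = 0")
    case True
    then show ?thesis using Phi_UTB[OF cs', of y] unfolding B_def by auto
  next
    case False
    define r where "r = inverse (norm y)"
    have r: "r > 0" using False by (simp add: r_def)
    have u: "Phi ?E J' y \<in> unit_tangent_bundle" using Phi_UTB[OF cs', of y] False by simp
    have f: "fst (Phi ?E J' y) = r *\<^sub>R ?E y" and s: "snd (Phi ?E J' y) = r *\<^sub>R ?E (J' y)"
      by (simp_all add: Phi_def r_def)
    have jj: "JJ (r *\<^sub>R ?E y) = r *\<^sub>R ?E (J4 y)"
      unfolding JJ_def linear_scale[OF lF] Fx_Emb[OF dist] linear_scale[OF lJ] linear_scale[OF lE] ..
    have inj: "?E u = ?E v \<longleftrightarrow> u = v" for u v
    proof
      assume "?E u = ?E v"
      then have "?E (u - v) = 0" by (simp add: linear_diff[OF lE])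
      then have "norm (u - v) = 0" using cs_normE[OF cs', of "u - v"] by simp
      then show "u = v" by simp
    qed simp
    have e1: "snd (Phi ?E J' y) = JJ (fst (Phi ?E J' y)) \<longleftrightarrow> J' y = J4 y"
      unfolding f s jj using r by (simp add: inj)
    have c: "(fst (Phi ?E J' y)) $ a = r * y$1" "(fst (Phi ?E J' y)) $ b = r * y$2"
        "(fst (Phi ?E J' y)) $ c = r * y$3" "(fst (Phi ?E J' y)) $ d = r * y$4"
      unfolding f using Emb_comp[OF dist] by simp_all
    have p: "0 < (r * s)^2 + (r * t)^2 \<longleftrightarrow> 0 < s^2 + t^2" for s t :: real
    proof -
      have "(r * s)^2 + (r * t)^2 = r^2 * (s^2 + t^2)" by (simp add: algebra_simps power_mult_distrib)
      then show ?thesis using r by (simp add: zero_less_mult_iff)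
    qed
    show ?thesis unfolding B_def using u e1 c p by auto
  qed
qed

lemma signed_ex:
  assumes "CARD('n::finite) \<ge> 4"
  shows "\<exists>\<mu> :: ((real^'n) \<times> (real^'n)) set \<Rightarrow> real.
            signed_measure_on UTB_space \<mu> \<and> even_measure \<mu> \<and> flow_invariant \<mu> \<and>
            (\<exists>B\<in>sets UTB_space. \<mu> B \<noteq> 0) \<and>
            (\<forall>A. proj_measure \<mu> A = 0)"
proof -
  obtain a b c d :: 'n where dist: "distinct [a,b,c,d]" using ex_abcd[OF assms] by blast
  define E where "E = Emb a b c d"
  have c1: "cs E J4" unfolding E_def by (rule J4_cs[OF dist])
  have c2: "cs E (\<lambda>x. - J4 x)" by (rule cs_neg[OF c1])
  have c3: "cs E K4" unfolding E_def by (rule K4_cs[OF dist])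
  have c4: "cs E (\<lambda>x. - K4 x)" by (rule cs_neg[OF c3])
  define mu :: "((real^'n) \<times> (real^'n)) set \<Rightarrow> real" where
    "mu A = mJ E J4 A + mJ E (\<lambda>x. - J4 x) A - mJ E K4 A - mJ E (\<lambda>x. - K4 x) A" for A
  have ca: "signed_measure_on UTB_space mu"
    unfolding countably_additive_on_def
  proof (intro allI impI)
    fix A :: "nat \<Rightarrow> ((real^'n) \<times> (real^'n)) set"
    assume h: "range A \<subseteq> sets UTB_space" "disjoint_family A"
    note s = mJ_ca[OF c1, unfolded countably_additive_on_def, rule_format, OF h]
      mJ_ca[OF c2, unfolded countably_additive_on_def, rule_format, OF h]
      mJ_ca[OF c3, unfolded countably_additive_on_def, rule_format, OF h]
      mJ_ca[OF c4, unfolded countably_additive_on_def, rule_format, OF h]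
    show "(\<lambda>i. mu (A i)) sums mu (\<Union>i. A i)"
      unfolding mu_def by (intro sums_diff sums_add s)
  qed
  have ev: "even_measure mu"
    unfolding even_measure_def
  proof
    fix A :: "((real^'n) \<times> (real^'n)) set" assume A: "A \<in> sets UTB_space"
    show "mu (flip_map -` A \<inter> unit_tangent_bundle) = mu A"
      unfolding mu_def using mJ_flip[OF c1 A] mJ_flip[OF c2 A] mJ_flip[OF c3 A] mJ_flip[OF c4 A]
      by simp
  qed
  have fi: "flow_invariant mu"
    unfolding flow_invariant_def
  proof (intro allI ballI)
    fix t and A :: "((real^'n) \<times> (real^'n)) set" assume A: "A \<in> sets UTB_space"
    show "mu (geodesic_flow t -` A \<inter> unit_tangent_bundle) = mu A"
      unfolding mu_def using mJ_flow[OF c1 A] mJ_flow[OF c2 A] mJ_flow[OF c3 A] mJ_flow[OF c4 A]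
      by simp
  qed
  have pr: "\<forall>A. proj_measure mu A = 0"
    unfolding proj_measure_def mu_def using mJ_proj[OF c1] mJ_proj[OF c2] mJ_proj[OF c3] mJ_proj[OF c4]
    by simp
  define JJ where "JJ \<equiv> \<lambda>x. Emb a b c d (J4 (Fx a b c d x))"
  define B where "B \<equiv> {p \<in> unit_tangent_bundle. snd p = JJ (fst p) \<and> 0 < (fst p $ a)^2 + (fst p $ b)^2 \<and> 0 < (fst p $ c)^2 + (fst p $ d)^2}"
  define U where "U = {y :: real^4. y \<in> ball 0 1 \<and> 0 < (y$1)^2 + (y$2)^2 \<and> 0 < (y$3)^2 + (y$4)^2}"
  have pre: "Phi E J' -` B \<inter> ball 0 1 = {y \<in> ball 0 1. J' y = J4 y \<and> 0 < (y$1)^2 + (y$2)^2 \<and> 0 < (y$3)^2 + (y$4)^2}"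
    if "cs E J'" for J'
    using pre_B[OF dist, of J'] that unfolding E_def JJ_def B_def by simp
  have s1: "Phi E J4 -` B \<inter> ball 0 1 = U" unfolding pre[OF c1] U_def by simp
  have s2: "Phi E (\<lambda>x. - J4 x) -` B \<inter> ball 0 1 = {}"
    unfolding pre[OF c2] by (auto simp: J4_def vec_eq_iff forall_4)
  have s3: "Phi E K4 -` B \<inter> ball 0 1 = {}"
    unfolding pre[OF c3] by (auto simp: J4_def K4_def vec_eq_iff forall_4)
  have s4: "Phi E (\<lambda>x. - K4 x) -` B \<inter> ball 0 1 = {}"
    unfolding pre[OF c4] by (auto simp: J4_def K4_def vec_eq_iff forall_4)
  have muB: "mu B = measure lborel U"
    unfolding mu_def mJ_def s1 s2 s3 s4 by simp
  have Uopen: "open U"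
  proof -
    have "U = ball 0 1 \<inter> {y. 0 < (y$1)^2 + (y$2)^2} \<inter> {y. 0 < (y$3)^2 + (y$4)^2}"
      unfolding U_def by auto
    also have "open \<dots>"
      by (intro open_Int open_ball open_Collect_less continuous_intros)
    finally show ?thesis .
  qed
  define p0 :: "real^4" where "p0 = (\<chi> i. if i = 1 \<or> i = 3 then 1/3 else 0)"
  have "norm p0 < 1"
  proof -
    have "norm p0 = sqrt (2/9)" unfolding p0_def by (simp add: norm_eq_sqrt_inner inner_vec_def sum_4)
    also have "\<dots> < 1" by (simp add: real_sqrt_lt_1_iff)
    finally show ?thesis .
  qed
  then have "p0 \<in> U" unfolding U_def p0_def by simp
  then obtain e where e: "e > 0" "ball p0 e \<subseteq> U" using Uopen open_contains_ball by blast
  have Ufm: "U \<in> fmeasurable lborel"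
  proof (rule fmeasurableI2)
    show "ball (0::real^4) 1 \<in> fmeasurable lborel"
      using emeasure_lborel_ball_finite[of "0::real^4" 1] by (auto simp: fmeasurable_def)
    show "U \<subseteq> ball 0 1" unfolding U_def by auto
    show "U \<in> sets lborel" using Uopen by simp
  qed
  have "0 < measure lborel (ball p0 e)" using content_ball_pos[OF e(1)] by simp
  also have "\<dots> \<le> measure lborel U" by (rule measure_mono_fmeasurable[OF e(2) _ Ufm]) simp
  finally have "mu B \<noteq> 0" using muB by simp
  moreover have "B \<in> sets UTB_space"
  proof -
    have lJJ: "linear JJ" unfolding JJ_def
      using linear_compose[OF linear_compose[OF Fx_linear[of a b c d] J4_cs[OF dist, unfolded cs_def, THEN conjunct2, THEN conjunct1]] Emb_linear[of a b c d]]
      by (simp add: o_def)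
    have cJJ: "continuous_on UNIV JJ" using lJJ by (intro linear_continuous_on) (simp add: linear_conv_bounded_linear)
    have cJJ2: "continuous_on UNIV (\<lambda>p::(real^'n)\<times>(real^'n). JJ (fst p))"
      by (rule continuous_on_compose2[OF cJJ continuous_on_fst[OF continuous_on_id]]) auto
    let ?B' = "{p::(real^'n)\<times>(real^'n). snd p = JJ (fst p)} \<inter> {p. 0 < (fst p $ a)^2 + (fst p $ b)^2} \<inter> {p. 0 < (fst p $ c)^2 + (fst p $ d)^2}"
    have "closed {p::(real^'n)\<times>(real^'n). snd p = JJ (fst p)}"
      by (intro closed_Collect_eq continuous_on_snd continuous_on_id cJJ2)
    moreover have "open {p::(real^'n)\<times>(real^'n). 0 < (fst p $ a)^2 + (fst p $ b)^2}"
      by (intro open_Collect_less continuous_intros)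
    moreover have "open {p::(real^'n)\<times>(real^'n). 0 < (fst p $ c)^2 + (fst p $ d)^2}"
      by (intro open_Collect_less continuous_intros)
    ultimately have "?B' \<in> sets borel" by (intro sets.Int borel_closed borel_open) auto
    moreover have "B = unit_tangent_bundle \<inter> ?B'" unfolding B_def by auto
    ultimately show ?thesis unfolding UTB_space_def sets_restrict_space by auto
  qed
  ultimately show ?thesis using ca ev fi pr by blast
qed

theorem theorem3:
  fixes j :: nat
  assumes "j \<ge> 2" and "CARD('n::finite) = 2 * j + 1"
  shows "(\<exists>\<mu>1 \<mu>2 :: ((real^'n) \<times> (real^'n)) set \<Rightarrow> complex.
            complex_measure_on UTB_space \<mu>1 \<and> complex_measure_on UTB_space \<mu>2 \<and>
            even_measure \<mu>1 \<and> even_measure \<mu>2 \<and>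
            flow_invariant \<mu>1 \<and> flow_invariant \<mu>2 \<and>
            (\<forall>A\<in>sets (sphere_space :: (real^'n) measure). proj_measure \<mu>1 A = proj_measure \<mu>2 A) \<and>
            (\<exists>B\<in>sets UTB_space. \<mu>1 B \<noteq> \<mu>2 B))
       \<and> (\<exists>\<mu> :: ((real^'n) \<times> (real^'n)) set \<Rightarrow> real.
            signed_measure_on UTB_space \<mu> \<and> even_measure \<mu> \<and> flow_invariant \<mu> \<and>
            (\<exists>B\<in>sets UTB_space. \<mu> B \<noteq> 0) \<and>
            (\<forall>A\<in>sets (borel :: (real^'n) measure). proj_measure \<mu> A = 0))"
proof -
  have "CARD('n) \<ge> 4" using assms by simp
  from signed_ex[OF this] obtain \<mu> :: "((real^'n) \<times> (real^'n)) set \<Rightarrow> real" where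
    ca: "signed_measure_on UTB_space \<mu>" and ev: "even_measure \<mu>" and fi: "flow_invariant \<mu>"
    and nz: "\<exists>B\<in>sets UTB_space. \<mu> B \<noteq> 0" and pr: "\<forall>A. proj_measure \<mu> A = 0"
    by blast
  define \<mu>1 :: "((real^'n) \<times> (real^'n)) set \<Rightarrow> complex" where "\<mu>1 A = complex_of_real (\<mu> A)" for A
  define \<mu>2 :: "((real^'n) \<times> (real^'n)) set \<Rightarrow> complex" where "\<mu>2 A = 0" for A
  have "complex_measure_on UTB_space \<mu>1"
    using ca unfolding countably_additive_on_def \<mu>1_def by (simp add: sums_of_real_iff)
  moreover have "complex_measure_on UTB_space \<mu>2"
    unfolding countably_additive_on_def \<mu>2_def by simp
  moreover have "even_measure \<mu>1" using ev unfolding even_measure_def \<mu>1_def by simp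
  moreover have "even_measure \<mu>2" unfolding even_measure_def \<mu>2_def by simp
  moreover have "flow_invariant \<mu>1" using fi unfolding flow_invariant_def \<mu>1_def by simp
  moreover have "flow_invariant \<mu>2" unfolding flow_invariant_def \<mu>2_def by simp
  moreover have "\<forall>A\<in>sets (sphere_space :: (real^'n) measure). proj_measure \<mu>1 A = proj_measure \<mu>2 A"
    using pr unfolding proj_measure_def \<mu>1_def \<mu>2_def by simp
  moreover have "\<exists>B\<in>sets UTB_space. \<mu>1 B \<noteq> \<mu>2 B"
    using nz unfolding \<mu>1_def \<mu>2_def by simp
  ultimately have P1: "\<exists>\<mu>1 \<mu>2 :: ((real^'n) \<times> (real^'n)) set \<Rightarrow> complex.
            complex_measure_on UTB_space \<mu>1 \<and> complex_measure_on UTB_space \<mu>2 \<and>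
            even_measure \<mu>1 \<and> even_measure \<mu>2 \<and>
            flow_invariant \<mu>1 \<and> flow_invariant \<mu>2 \<and>
            (\<forall>A\<in>sets (sphere_space :: (real^'n) measure). proj_measure \<mu>1 A = proj_measure \<mu>2 A) \<and>
            (\<exists>B\<in>sets UTB_space. \<mu>1 B \<noteq> \<mu>2 B)" by blast
  have P2: "\<exists>\<mu> :: ((real^'n) \<times> (real^'n)) set \<Rightarrow> real.
            signed_measure_on UTB_space \<mu> \<and> even_measure \<mu> \<and> flow_invariant \<mu> \<and>
            (\<exists>B\<in>sets UTB_space. \<mu> B \<noteq> 0) \<and>
            (\<forall>A\<in>sets (borel :: (real^'n) measure). proj_measure \<mu> A = 0)"
    using ca ev fi nz pr by blast
  show ?thesis using P1 P2 by blast
qed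

end
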